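(* Let $A=\{a_1,a_2,\dots,a_k\}$ be a set of $k$ distinct positive integers with $\gcd(a_1,\dots,a_k)=1$. Then, as $n\to\infty$, $$N^p_A(n)\sim\frac{1}{k!}\,\frac{\frac{1}{a_1}+\frac{1}{a_2}+\cdots+\frac{1}{a_k}}{a_1a_2\cdots a_k}\,n^k.$$
   Context: $N^p_A(n)$ is the total number of parts, summed over all partitions of $n$ (unordered sequences of positive integers summing to $n$) with all parts in $A$. *)

theory Defs
  imports Complex_Main "HOL-Library.Multiset" "HOL-Library.Landau_Symbols"
begin

definition partitions_in :: "nat set \<Rightarrow> nat \<Rightarrow> nat multiset set" where
  "partitions_in A n = {M. set_mset M \<subseteq> A \<and> sum_mset M = n}"

definition NpA :: "nat set \<Rightarrow> nat \<Rightarrow> nat" where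
  "NpA A n = (\<Sum>M\<in>partitions_in A n. size M)"

end

theory Submission
  imports Defs
begin

fun cnt :: "nat list \<Rightarrow> nat \<Rightarrow> nat" where
  "cnt [] n = (if n = 0 then 1 else 0)"
| "cnt (b # L) n = (\<Sum>j\<le>n div b. cnt L (n - j * b))"

definition Q :: "nat list \<Rightarrow> nat \<Rightarrow> nat" where
  "Q L n = (\<Sum>m\<le>n. cnt L m)"

lemma sum_step_ge:
  fixes f :: "nat \<Rightarrow> 'a::comm_monoid_add"
  assumes "b > 0" "m \<ge> b"
  shows "(\<Sum>j\<le>m div b. f (m - j * b)) = f m + (\<Sum>j\<le>(m - b) div b. f (m - b - j * b))"
proof -
  have "m div b = Suc ((m - b) div b)" using assms
    by (simp add: le_div_geq)
  then have "(\<Sum>j\<le>m div b. f (m - j * b)) = f m + (\<Sum>j\<le>(m - b) div b. f (m - Suc j * b))"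
    by (simp only: sum.atMost_Suc_shift) simp
  also have "(\<Sum>j\<le>(m - b) div b. f (m - Suc j * b)) = (\<Sum>j\<le>(m - b) div b. f (m - b - j * b))"
    by (intro sum.cong refl) (simp add: diff_diff_add add.commute)
  finally show ?thesis .
qed

lemma sum_step_lt:
  fixes f :: "nat \<Rightarrow> 'a::comm_monoid_add"
  assumes "m < b"
  shows "(\<Sum>j\<le>m div b. f (m - j * b)) = f m"
  using assms by simp

lemma cnt_step:
  assumes "b > 0"
  shows "cnt (b # L) n = cnt L n + (if n \<ge> b then cnt (b # L) (n - b) else 0)"
  using assms by (simp add: sum_step_ge)

lemma Q_step:
  assumes "b > 0"
  shows "Q (b # L) n = Q L n + (if n \<ge> b then Q (b # L) (n - b) else 0)"
proof (cases "n \<ge> b")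
  case True
  have "Q (b # L) n = (\<Sum>m\<le>n. cnt L m + (if m \<ge> b then cnt (b # L) (m - b) else 0))"
    unfolding Q_def using assms by (intro sum.cong refl) (rule cnt_step)
  also have "\<dots> = Q L n + (\<Sum>m\<le>n. if m \<ge> b then cnt (b # L) (m - b) else 0)"
    by (simp add: sum.distrib Q_def)
  also have "(\<Sum>m\<le>n. if m \<ge> b then cnt (b # L) (m - b) else 0) = (\<Sum>m\<in>{b..n}. cnt (b # L) (m - b))"
    by (rule sum.mono_neutral_cong_right) auto
  also have "\<dots> = (\<Sum>m\<le>n - b. cnt (b # L) m)"
  proof -
    have "{b..n} = {0 + b..(n - b) + b}" using True by simp
    then show ?thesis by (simp only: sum.shift_bounds_cl_nat_ivl atMost_atLeast0) simp
  qed
  finally show ?thesis using True by (simp add: Q_def)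
next
  case False
  then show ?thesis unfolding Q_def using assms by (auto intro!: sum.cong)
qed

lemma Q_rec:
  assumes "b > 0"
  shows "Q (b # L) n = (\<Sum>j\<le>n div b. Q L (n - j * b))"
proof (induction n rule: less_induct)
  case (less n)
  show ?case
  proof (cases "n \<ge> b")
    case True
    have "Q (b # L) n = Q L n + Q (b # L) (n - b)" using Q_step[OF assms] True by simp
    also have "Q (b # L) (n - b) = (\<Sum>j\<le>(n - b) div b. Q L (n - b - j * b))"
      using less assms True by simp
    finally show ?thesis using sum_step_ge[OF assms True, of "Q L"] by simp
  next
    case False
    then show ?thesis using Q_step[OF assms, of L n] by simp
  qed
qed

lemma Q_window:
  assumes "b > 0"
  shows "(\<Sum>m\<in>{n<..n+b}. cnt (b # L) m) = Q L (n + b)"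
proof -
  have "Q (b # L) (n + b) = Q (b # L) n + (\<Sum>m\<in>{n<..n+b}. cnt (b # L) m)"
  proof -
    have "{..n+b} = {..n} \<union> {n<..n+b}" by auto
    then show ?thesis unfolding Q_def by (simp only:) (rule sum.union_disjoint, auto)
  qed
  then show ?thesis using Q_step[OF assms, of L "n + b"] by simp
qed

lemma cnt_mono:
  assumes "cnt K m > 0"
  shows "cnt K n \<le> cnt K (n + m)"
  using assms
proof (induction K arbitrary: n m)
  case Nil
  then show ?case by (simp split: if_splits)
next
  case (Cons b L)
  have "\<exists>j\<in>{..m div b}. cnt L (m - j * b) \<noteq> 0"
    using Cons.prems by (metis (mono_tags, lifting) sum.neutral cnt.simps(2) less_irrefl)
  then obtain j0 where j0: "j0 \<le> m div b" "cnt L (m - j0 * b) > 0" by auto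
  have j0b: "j0 * b \<le> m"
    using j0(1) by (metis div_times_less_eq_dividend le_trans mult_le_mono1)
  have "cnt (b # L) n = (\<Sum>j\<le>n div b. cnt L (n - j * b))" by simp
  also have "\<dots> \<le> (\<Sum>j\<le>n div b. cnt L (n + m - (j + j0) * b))"
  proof (intro sum_mono)
    fix j assume "j \<in> {..n div b}"
    then have "j * b \<le> n" by (metis atMost_iff div_times_less_eq_dividend le_trans mult_le_mono1)
    then have "n + m - (j + j0) * b = (n - j * b) + (m - j0 * b)"
      using j0b by (simp add: algebra_simps)
    then show "cnt L (n - j * b) \<le> cnt L (n + m - (j + j0) * b)"
      using Cons.IH[OF j0(2)] by simp
  qed
  also have "\<dots> = (\<Sum>i\<in>(\<lambda>j. j + j0) ` {..n div b}. cnt L (n + m - i * b))"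
    by (simp add: sum.reindex)
  also have "\<dots> \<le> (\<Sum>i\<le>(n + m) div b. cnt L (n + m - i * b))"
  proof (rule sum_mono2)
    show "(\<lambda>j. j + j0) ` {..n div b} \<subseteq> {..(n + m) div b}"
    proof
      fix i assume "i \<in> (\<lambda>j. j + j0) ` {..n div b}"
      then obtain j where "j \<le> n div b" "i = j + j0" by auto
      moreover have "n div b + m div b \<le> (n + m) div b"
      proof (cases "b = 0")
        case False
        then show ?thesis by (simp add: less_eq_div_iff_mult_less_eq add_mult_distrib add_mono)
      qed simp
      ultimately show "i \<in> {..(n + m) div b}" using j0(1) by auto
    qed
  qed auto
  finally show ?case by simp
qed

lemma cnt_zero: "cnt K 0 = 1"
  by (induction K) auto

lemma cnt_pos_elem:
  assumes "b \<in> set K" "b > 0"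
  shows "cnt K b > 0"
  using assms
proof (induction K)
  case Nil then show ?case by simp
next
  case (Cons c L)
  show ?case
  proof (cases "b = c")
    case True
    have "cnt L (b - 1 * b) > 0" by (simp add: cnt_zero)
    moreover have "1 \<le> b div c" using True Cons.prems by simp
    ultimately show ?thesis using True
      by (simp del: cnt.simps(2)) (simp, intro sum_pos2[where i=1], auto simp: cnt_zero)
  next
    case False
    then have "cnt L b > 0" using Cons by simp
    then show ?thesis by simp (intro sum_pos2[where i=0], auto)
  qed
qed

lemma cnt_add_pos:
  assumes "cnt K m > 0" "cnt K m' > 0"
  shows "cnt K (m + m') > 0"
  using cnt_mono[OF assms(2), of m] assms(1) by simp

lemma cnt_mult_pos:
  assumes "cnt K m > 0"
  shows "cnt K (c * m) > 0"
  by (induction c) (auto simp: cnt_zero intro: cnt_add_pos assms)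

lemma cnt_sum_pos:
  assumes "finite A" "\<And>a. a \<in> A \<Longrightarrow> cnt K (f a) > 0"
  shows "cnt K (\<Sum>a\<in>A. f a) > 0"
  using assms by (induction A rule: finite_induct) (auto simp: cnt_zero intro: cnt_add_pos)

lemma bezout_set:
  fixes A :: "nat set"
  assumes "finite A"
  shows "\<exists>c :: nat \<Rightarrow> int. (\<Sum>x\<in>A. c x * int x) = int (Gcd A)"
  using assms
proof (induction A rule: finite_induct)
  case empty
  then show ?case by simp
next
  case (insert a B)
  then obtain c where c: "(\<Sum>x\<in>B. c x * int x) = int (Gcd B)" by blast
  obtain u v where uv: "u * int a + v * int (Gcd B) = gcd (int a) (int (Gcd B))"
    using bezout_int by blast
  define c' where "c' x = (if x = a then u else v * c x)" for x
  have "(\<Sum>x\<in>insert a B. c' x * int x) = u * int a + (\<Sum>x\<in>B. v * (c x * int x))"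
    using insert.hyps by (simp add: c'_def mult.assoc cong: sum.cong) (intro sum.cong, auto)
  also have "\<dots> = u * int a + v * int (Gcd B)"
    by (simp add: sum_distrib_left[symmetric] c)
  also have "\<dots> = int (Gcd (insert a B))" using uv by simp
  finally show ?case by blast
qed

lemma frobenius:
  assumes "finite A" "Gcd A = 1" "A \<subseteq> set K" "\<forall>a\<in>A. a > 0"
  shows "\<exists>F. \<forall>m\<ge>F. cnt K m > 0"
proof -
  obtain c :: "nat \<Rightarrow> int" where c: "(\<Sum>x\<in>A. c x * int x) = 1"
    using bezout_set[OF assms(1)] assms(2) by auto
  define P where "P = (\<Sum>x\<in>A. nat (max (c x) 0) * x)"
  define N where "N = (\<Sum>x\<in>A. nat (max (- c x) 0) * x)"
  have PN: "int P = int N + 1"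
  proof -
    have "int P - int N = (\<Sum>x\<in>A. (int (nat (max (c x) 0)) - int (nat (max (- c x) 0))) * int x)"
      by (simp add: P_def N_def sum_subtractf left_diff_distrib)
    also have "\<dots> = (\<Sum>x\<in>A. c x * int x)"
      by (intro sum.cong refl) (simp add: max_def)
    finally show ?thesis using c by simp
  qed
  have elem: "cnt K x > 0" if "x \<in> A" for x
    using cnt_pos_elem assms(3,4) that by blast
  have Ppos: "cnt K P > 0" unfolding P_def
    by (intro cnt_sum_pos assms(1) cnt_mult_pos elem)
  have Npos: "cnt K N > 0" unfolding N_def
    by (intro cnt_sum_pos assms(1) cnt_mult_pos elem)
  have "cnt K m > 0" if "m \<ge> N * N" for m
  proof (cases "N = 0")
    case True
    then have "P = 1" using PN by simp
    then have "cnt K (m * P) > 0" using cnt_mult_pos Ppos by blast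
    then show ?thesis using \<open>P = 1\<close> by simp
  next
    case False
    define q where "q = m div N"
    define s where "s = m mod N"
    have "s < N" using False by (simp add: s_def)
    have "q \<ge> N" using that False unfolding q_def
      by (simp add: less_eq_div_iff_mult_less_eq)
    have "m = (q - s) * N + s * P"
    proof -
      have "P = N + 1" using PN by simp
      moreover have "m = q * N + s" by (simp add: q_def s_def)
      ultimately show ?thesis using \<open>s < N\<close> \<open>q \<ge> N\<close>
        by (simp add: algebra_simps diff_mult_distrib)
    qed
    moreover have "cnt K ((q - s) * N + s * P) > 0"
      by (intro cnt_add_pos cnt_mult_pos Ppos Npos)
    ultimately show ?thesis by simp
  qed
  then show ?thesis by blast
qed

lemma almost_mono:
  assumes "finite A" "Gcd A = 1" "A \<subseteq> set K" "\<forall>a\<in>A. a > 0"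
  shows "\<exists>F. \<forall>x y. x + F \<le> y \<longrightarrow> cnt K x \<le> cnt K y"
proof -
  obtain F where F: "\<forall>m\<ge>F. cnt K m > 0" using frobenius[OF assms] by blast
  have "cnt K x \<le> cnt K y" if "x + F \<le> y" for x y
  proof -
    have "y = x + (y - x)" using that by simp
    moreover have "cnt K (y - x) > 0" using F that by simp
    ultimately show ?thesis using cnt_mono by metis
  qed
  then show ?thesis by blast
qed

lemma pow_diff_bounds:
  fixes u v :: real
  assumes "0 \<le> u" "u \<le> v"
  shows "real (Suc r) * (v - u) * u ^ r \<le> v ^ Suc r - u ^ Suc r \<and>
         v ^ Suc r - u ^ Suc r \<le> real (Suc r) * (v - u) * v ^ r"
proof (induction r)
  case 0 then show ?case by simp
next
  case (Suc r)
  have e: "v ^ Suc (Suc r) - u ^ Suc (Suc r) = v * (v ^ Suc r - u ^ Suc r) + u ^ Suc r * (v - u)"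
    by (simp add: algebra_simps)
  have uv: "u ^ r \<le> v ^ r" "u ^ Suc r \<le> v ^ Suc r" using power_mono[OF assms(2,1)] by blast+
  have d: "0 \<le> v - u" using assms by simp
  have v0: "0 \<le> v" using assms by simp
  have l1: "v * (real (Suc r) * (v - u) * u ^ r) \<ge> u * (real (Suc r) * (v - u) * u ^ r)"
    using assms by (intro mult_right_mono) (auto intro!: mult_nonneg_nonneg)
  have l2: "v * (v ^ Suc r - u ^ Suc r) \<ge> v * (real (Suc r) * (v - u) * u ^ r)"
    using Suc.IH v0 by (intro mult_left_mono) auto
  have u1: "v * (v ^ Suc r - u ^ Suc r) \<le> v * (real (Suc r) * (v - u) * v ^ r)"
    using Suc.IH v0 by (intro mult_left_mono) auto
  have u2: "u ^ Suc r * (v - u) \<le> v ^ Suc r * (v - u)"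
    using uv d by (intro mult_right_mono) auto
  show ?case
  proof
    show "real (Suc (Suc r)) * (v - u) * u ^ Suc r \<le> v ^ Suc (Suc r) - u ^ Suc (Suc r)"
      unfolding e using l1 l2 by (simp add: algebra_simps)
    show "v ^ Suc (Suc r) - u ^ Suc (Suc r) \<le> real (Suc (Suc r)) * (v - u) * v ^ Suc r"
      unfolding e using u1 u2 by (simp add: algebra_simps)
  qed
qed

lemma lower_sum:
  fixes b n J r :: nat
  assumes "b > 0" "J = n div b"
  shows "real n ^ Suc r \<le> real (Suc r) * real b * (\<Sum>j\<le>J. (real n - real j * real b) ^ r)"
proof -
  define u where "u j = (max (real n - real j * real b) 0) ^ Suc r" for j
  have tel: "(\<Sum>j\<le>J. u j - u (Suc j)) = u 0 - u (Suc J)" by (rule sum_telescope)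
  have "real (Suc J) * real b > real n"
  proof -
    have m: "n mod b < b" using assms by simp
    have "n = J * b + n mod b" using assms(2) by simp
    then have "n < Suc J * b" using m by simp
    then show ?thesis by (metis of_nat_less_iff of_nat_mult)
  qed
  then have "u (Suc J) = 0" by (simp add: u_def max_def)
  moreover have "u 0 = real n ^ Suc r" by (simp add: u_def)
  ultimately have "real n ^ Suc r = (\<Sum>j\<le>J. u j - u (Suc j))" using tel by simp
  also have "\<dots> \<le> (\<Sum>j\<le>J. real (Suc r) * real b * (real n - real j * real b) ^ r)"
  proof (intro sum_mono)
    fix j assume "j \<in> {..J}"
    then have "j * b \<le> n" using assms
      by (simp add: less_eq_div_iff_mult_less_eq)
    then have x0: "0 \<le> real n - real j * real b" by (metis diff_ge_0_iff_ge of_nat_le_iff of_nat_mult)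
    define x where "x = real n - real j * real b"
    have ux: "u j = x ^ Suc r" using x0 by (simp add: u_def x_def)
    have b0: "real b > 0" using assms by simp
    show "u j - u (Suc j) \<le> real (Suc r) * real b * (real n - real j * real b) ^ r"
    proof (cases "x \<ge> real b")
      case True
      have "u (Suc j) = (x - real b) ^ Suc r" using True
        by (simp add: u_def x_def algebra_simps max_def)
      then show ?thesis using pow_diff_bounds[of "x - real b" x r] True b0 ux
        by (simp add: x_def)
    next
      case False
      have "u (Suc j) = 0" using False
        by (simp add: u_def x_def algebra_simps max_def)
      moreover have "x * x ^ r \<le> real b * x ^ r" using False x0
        by (intro mult_right_mono) (auto simp: x_def)
      moreover have "real b * x ^ r \<le> real (Suc r) * real b * x ^ r"
        using x0 b0 by (intro mult_right_mono) (auto simp: x_def)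
      ultimately show ?thesis using ux by (simp add: x_def)
    qed
  qed
  finally show ?thesis by (simp add: sum_distrib_left)
qed

lemma upper_sum:
  fixes b n J r :: nat and s :: real
  assumes "b > 0" "J = n div b" "s \<ge> 0"
  shows "real (Suc r) * real b * (\<Sum>j\<le>J. (real n - real j * real b + s) ^ r) \<le> (real n + s + real b) ^ Suc r"
proof -
  define v where "v j = (real n - real j * real b + s + real b) ^ Suc r" for j
  have tel: "(\<Sum>j\<le>J. v j - v (Suc j)) = v 0 - v (Suc J)" by (rule sum_telescope)
  have "J * b \<le> n" using assms by simp
  then have "real J * real b \<le> real n" by (metis of_nat_le_iff of_nat_mult)
  then have "0 \<le> real n - real (Suc J) * real b + s + real b" using assms by (simp add: algebra_simps)
  then have "v (Suc J) \<ge> 0" unfolding v_def by simp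
  have "(\<Sum>j\<le>J. real (Suc r) * real b * (real n - real j * real b + s) ^ r) \<le> (\<Sum>j\<le>J. v j - v (Suc j))"
  proof (intro sum_mono)
    fix j assume "j \<in> {..J}"
    then have "j * b \<le> n" using assms
      by (simp add: less_eq_div_iff_mult_less_eq)
    then have x0: "0 \<le> real n - real j * real b" by (metis diff_ge_0_iff_ge of_nat_le_iff of_nat_mult)
    define x where "x = real n - real j * real b + s"
    have "v j = (x + real b) ^ Suc r" "v (Suc j) = x ^ Suc r"
      by (simp_all add: v_def x_def algebra_simps)
    then show "real (Suc r) * real b * (real n - real j * real b + s) ^ r \<le> v j - v (Suc j)"
      using pow_diff_bounds[of x "x + real b" r] x0 assms(3) unfolding x_def by simp
  qed
  also have "\<dots> \<le> v 0" using tel \<open>v (Suc J) \<ge> 0\<close> by simp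
  also have "v 0 = (real n + s + real b) ^ Suc r" by (simp add: v_def)
  finally show ?thesis by (simp only: sum_distrib_left)
qed

lemma prod_list_pos: "\<forall>x\<in>set L. x > 0 \<Longrightarrow> 0 < prod_list (L :: nat list)"
  by (induction L) auto

lemma Q_bounds:
  assumes "\<forall>x\<in>set L. x > 0"
  shows "real n ^ length L / (fact (length L) * real (prod_list L)) \<le> real (Q L n) \<and>
         real (Q L n) \<le> (real n + real (sum_list L)) ^ length L / (fact (length L) * real (prod_list L))"
  using assms
proof (induction L arbitrary: n)
  case Nil
  then show ?case by (simp add: Q_def cnt_zero)
next
  case (Cons b L)
  define r where "r = length L"
  define c where "c = fact r * real (prod_list L)"
  define s where "s = real (sum_list L)"
  define J where "J = n div b"
  have b0: "b > 0" using Cons.prems by simp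
  have c0: "c > 0" using Cons.prems unfolding c_def
    by (intro mult_pos_pos) (auto intro: prod_list_pos)
  have s0: "s \<ge> 0" by (simp add: s_def)
  have IH: "(real n - real j * real b) ^ r / c \<le> real (Q L (n - j * b)) \<and>
            real (Q L (n - j * b)) \<le> (real n - real j * real b + s) ^ r / c" if "j \<le> J" for j
  proof -
    have "j * b \<le> n" using that b0 by (simp add: J_def less_eq_div_iff_mult_less_eq)
    then have "real (n - j * b) = real n - real j * real b" by (simp add: of_nat_diff)
    then show ?thesis using Cons.IH[of "n - j * b"] Cons.prems unfolding r_def c_def s_def by simp
  qed
  have Qe: "real (Q (b # L) n) = (\<Sum>j\<le>J. real (Q L (n - j * b)))"
    using Q_rec[OF b0] by (simp add: J_def)
  have c': "fact (length (b # L)) * real (prod_list (b # L)) = real (Suc r) * real b * c"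
    by (simp add: r_def c_def algebra_simps)
  have low: "real n ^ Suc r / (real (Suc r) * real b * c) \<le> real (Q (b # L) n)"
  proof -
    have "real n ^ Suc r / (real (Suc r) * real b * c) \<le>
          (real (Suc r) * real b * (\<Sum>j\<le>J. (real n - real j * real b) ^ r)) / (real (Suc r) * real b * c)"
      using lower_sum[OF b0 J_def, of r] c0 b0 by (intro divide_right_mono) auto
    also have "\<dots> = (\<Sum>j\<le>J. (real n - real j * real b) ^ r / c)"
      using c0 b0 by (simp add: sum_divide_distrib)
    also have "\<dots> \<le> (\<Sum>j\<le>J. real (Q L (n - j * b)))"
      using IH by (intro sum_mono) auto
    finally show ?thesis using Qe by simp
  qed
  have up: "real (Q (b # L) n) \<le> (real n + s + real b) ^ Suc r / (real (Suc r) * real b * c)"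
  proof -
    have "real (Q (b # L) n) \<le> (\<Sum>j\<le>J. (real n - real j * real b + s) ^ r / c)"
      unfolding Qe using IH by (intro sum_mono) auto
    also have "\<dots> = (real (Suc r) * real b * (\<Sum>j\<le>J. (real n - real j * real b + s) ^ r)) / (real (Suc r) * real b * c)"
      using c0 b0 by (simp add: sum_divide_distrib)
    also have "\<dots> \<le> (real n + s + real b) ^ Suc r / (real (Suc r) * real b * c)"
      using upper_sum[OF b0 J_def s0, of r] c0 b0 by (intro divide_right_mono) auto
    finally show ?thesis .
  qed
  show ?case using low up unfolding c'
    by (simp add: r_def s_def algebra_simps)
qed

lemma div_div_cancel: "(c::real) \<noteq> 0 \<Longrightarrow> (x / c) / (y / c) = x / y"
  by (cases "y = 0") (simp_all add: field_simps)

lemma shift_lim: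
  fixes f :: "nat \<Rightarrow> real"
  assumes "(\<lambda>n. f n / real n ^ r) \<longlonglongrightarrow> l"
  shows "(\<lambda>n. f (n + d) / real (n + e) ^ r) \<longlonglongrightarrow> l"
proof -
  have 1: "(\<lambda>n. f (n + d) / real (n + d) ^ r) \<longlonglongrightarrow> l"
    using LIMSEQ_ignore_initial_segment[OF assms, of d] by simp
  have "(\<lambda>n. (1 + real d / real n) / (1 + real e / real n)) \<longlonglongrightarrow> (1 + 0) / (1 + 0)"
    by (intro tendsto_intros) auto
  then have "(\<lambda>n. (1 + real d / real n) / (1 + real e / real n)) \<longlonglongrightarrow> 1" by simp
  moreover have "\<forall>\<^sub>F n in sequentially. (1 + real d / real n) / (1 + real e / real n) = real (n + d) / real (n + e)"
    using eventually_gt_at_top[of 0]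
  proof eventually_elim
    case (elim n)
    have a: "1 + real d / real n = real (n + d) / real n" using elim by (simp add: field_simps)
    have b: "1 + real e / real n = real (n + e) / real n" using elim by (simp add: field_simps)
    have "real n \<noteq> 0" using elim by simp
    then show ?case unfolding a b by (rule div_div_cancel)
  qed
  ultimately have h3: "(\<lambda>n. real (n + d) / real (n + e)) \<longlonglongrightarrow> 1"
    by (rule Lim_transform_eventually)
  have 2: "(\<lambda>n. (real (n + d) / real (n + e)) ^ r) \<longlonglongrightarrow> 1"
    using tendsto_power[OF h3, of r] by simp
  have "(\<lambda>n. f (n + d) / real (n + d) ^ r * (real (n + d) / real (n + e)) ^ r) \<longlonglongrightarrow> l * 1"
    by (intro tendsto_mult 1 2)
  then have "(\<lambda>n. f (n + d) / real (n + d) ^ r * (real (n + d) / real (n + e)) ^ r) \<longlonglongrightarrow> l" by simp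
  moreover have "\<forall>\<^sub>F n in sequentially. f (n + d) / real (n + d) ^ r * (real (n + d) / real (n + e)) ^ r = f (n + d) / real (n + e) ^ r"
    using eventually_gt_at_top[of 0] by eventually_elim (simp add: power_divide)
  ultimately show ?thesis by (rule Lim_transform_eventually)
qed

lemma Q_lim:
  assumes "\<forall>x\<in>set L. x > 0"
  shows "(\<lambda>n. real (Q L n) / real n ^ length L) \<longlonglongrightarrow> 1 / (fact (length L) * real (prod_list L))"
proof -
  define r where "r = length L"
  define c where "c = fact r * real (prod_list L)"
  define s where "s = real (sum_list L)"
  have c0: "c > 0" using assms unfolding c_def
    by (intro mult_pos_pos) (auto intro: prod_list_pos)
  have "(\<lambda>n. (1 + s / real n) ^ r / c) \<longlonglongrightarrow> (1 + 0) ^ r / c"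
    by (intro tendsto_intros) (use c0 in auto)
  then have h: "(\<lambda>n. (1 + s / real n) ^ r / c) \<longlonglongrightarrow> 1 / c" by simp
  have ev1: "\<forall>\<^sub>F n in sequentially. 1 / c \<le> real (Q L n) / real n ^ r"
    using eventually_gt_at_top[of 0]
  proof eventually_elim
    case (elim n)
    have "real n ^ r / c \<le> real (Q L n)" using Q_bounds[OF assms, of n] by (simp add: r_def c_def)
    then have "(real n ^ r / c) / real n ^ r \<le> real (Q L n) / real n ^ r"
      using elim by (intro divide_right_mono) auto
    moreover have "(real n ^ r / c) / real n ^ r = 1 / c" using elim by simp
    ultimately show ?case by simp
  qed
  have ev2: "\<forall>\<^sub>F n in sequentially. real (Q L n) / real n ^ r \<le> (1 + s / real n) ^ r / c"
    using eventually_gt_at_top[of 0]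
  proof eventually_elim
    case (elim n)
    have "real (Q L n) \<le> (real n + s) ^ r / c" using Q_bounds[OF assms, of n] by (simp add: r_def c_def s_def)
    then have "real (Q L n) / real n ^ r \<le> ((real n + s) ^ r / c) / real n ^ r"
      using elim by (intro divide_right_mono) auto
    moreover have "1 + s / real n = (real n + s) / real n" using elim by (simp add: field_simps)
    then have "(1 + s / real n) ^ r = (real n + s) ^ r / real n ^ r"
      by (simp add: power_divide)
    ultimately show ?case by (simp add: mult.commute)
  qed
  have "(\<lambda>n. real (Q L n) / real n ^ r) \<longlonglongrightarrow> 1 / c"
    by (rule tendsto_sandwich[OF ev1 ev2 tendsto_const h])
  then show ?thesis by (simp add: r_def c_def)
qed

lemma schur:
  assumes "finite A" "Gcd A = 1" "A \<subseteq> set (b # L)" "\<forall>a\<in>A. a > 0" "\<forall>x\<in>set (b # L). x > 0"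
  shows "(\<lambda>n. real (cnt (b # L) n) / real n ^ length L)
           \<longlonglongrightarrow> 1 / (fact (length L) * real (prod_list L)) / real b"
proof -
  define K where "K = b # L"
  define r where "r = length L"
  define l where "l = 1 / (fact (length L) * real (prod_list L))"
  obtain F where F: "\<And>x y. x + F \<le> y \<Longrightarrow> cnt K x \<le> cnt K y"
    using almost_mono[OF assms(1-4)] unfolding K_def by blast
  have b0: "b > 0" using assms(5) by simp
  have QL: "(\<lambda>n. real (Q L n) / real n ^ r) \<longlonglongrightarrow> l"
    using Q_lim[of L] assms(5) by (simp add: r_def l_def)
  define k0 where "k0 = b + F"
  have cardw: "card {n<..n + b} = b" for n by simp
  have low: "real (Q L (n + b)) / real b \<le> real (cnt K (n + k0))" for n
  proof -
    have "Q L (n + b) = (\<Sum>m\<in>{n<..n+b}. cnt K m)" using Q_window[OF b0] by (simp add: K_def)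
    also have "\<dots> \<le> (\<Sum>m\<in>{n<..n+b}. cnt K (n + k0))"
      by (intro sum_mono F) (auto simp: k0_def)
    also have "\<dots> = b * cnt K (n + k0)" by simp
    finally have "real (Q L (n + b)) \<le> real b * real (cnt K (n + k0))"
      by (metis of_nat_le_iff of_nat_mult)
    then show ?thesis using b0 by (simp add: field_simps)
  qed
  have up: "real (cnt K (n + k0)) \<le> real (Q L (n + (2 * b + 2 * F))) / real b" for n
  proof -
    have "b * cnt K (n + k0) = (\<Sum>m\<in>{n + b + 2 * F<..n + b + 2 * F + b}. cnt K (n + k0))" by simp
    also have "\<dots> \<le> (\<Sum>m\<in>{n + b + 2 * F<..n + b + 2 * F + b}. cnt K m)"
      by (intro sum_mono F) (auto simp: k0_def)
    also have "\<dots> = Q L (n + b + 2 * F + b)" unfolding K_def by (rule Q_window[OF b0])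
    finally have "real b * real (cnt K (n + k0)) \<le> real (Q L (n + (2 * b + 2 * F)))"
      by (metis of_nat_le_iff of_nat_mult add.assoc add.commute add.left_commute mult_2)
    then show ?thesis using b0 by (simp add: field_simps)
  qed
  have l1: "(\<lambda>n. real (Q L (n + b)) / real (n + k0) ^ r / real b) \<longlonglongrightarrow> l / real b"
    by (intro tendsto_divide shift_lim[OF QL] tendsto_const) (use b0 in auto)
  have l2: "(\<lambda>n. real (Q L (n + (2 * b + 2 * F))) / real (n + k0) ^ r / real b) \<longlonglongrightarrow> l / real b"
    by (intro tendsto_divide shift_lim[OF QL] tendsto_const) (use b0 in auto)
  have "(\<lambda>n. real (cnt K (n + k0)) / real (n + k0) ^ r) \<longlonglongrightarrow> l / real b"
  proof (rule tendsto_sandwich[OF _ _ l1 l2])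
    show "\<forall>\<^sub>F n in sequentially. real (Q L (n + b)) / real (n + k0) ^ r / real b \<le> real (cnt K (n + k0)) / real (n + k0) ^ r"
    proof (intro always_eventually allI)
      fix n
      have "real (Q L (n + b)) / real b / real (n + k0) ^ r \<le> real (cnt K (n + k0)) / real (n + k0) ^ r"
        by (intro divide_right_mono low) auto
      then show "real (Q L (n + b)) / real (n + k0) ^ r / real b \<le> real (cnt K (n + k0)) / real (n + k0) ^ r"
        by (simp add: divide_divide_eq_left mult.commute)
    qed
    show "\<forall>\<^sub>F n in sequentially. real (cnt K (n + k0)) / real (n + k0) ^ r \<le> real (Q L (n + (2 * b + 2 * F))) / real (n + k0) ^ r / real b"
    proof (intro always_eventually allI)
      fix n
      have "real (cnt K (n + k0)) / real (n + k0) ^ r \<le> real (Q L (n + (2 * b + 2 * F))) / real b / real (n + k0) ^ r"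
        by (intro divide_right_mono up) auto
      then show "real (cnt K (n + k0)) / real (n + k0) ^ r \<le> real (Q L (n + (2 * b + 2 * F))) / real (n + k0) ^ r / real b"
        by (simp add: divide_divide_eq_left mult.commute)
    qed
  qed
  then have "(\<lambda>n. real (cnt K n) / real n ^ r) \<longlonglongrightarrow> l / real b"
    using LIMSEQ_offset[of "\<lambda>n. real (cnt K n) / real n ^ r" k0] by simp
  then show ?thesis by (simp add: K_def r_def l_def)
qed

lemma partitions_in_empty: "partitions_in {} n = (if n = 0 then {{#}} else {})"
  by (auto simp: partitions_in_def)

lemma partitions_in_insert:
  assumes "b \<notin> B" "b > 0"
  shows "partitions_in (insert b B) n =
         (\<Union>j\<in>{..n div b}. (\<lambda>M. M + replicate_mset j b) ` partitions_in B (n - j * b))"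
proof (intro equalityI subsetI)
  fix M assume M: "M \<in> partitions_in (insert b B) n"
  define j where "j = count M b"
  define M' where "M' = M - replicate_mset j b"
  have Meq: "M = M' + replicate_mset j b"
    unfolding M'_def j_def by (metis count_le_replicate_mset_subset_eq order_refl subset_mset.diff_add)
  have "set_mset M' \<subseteq> B"
  proof
    fix x assume x: "x \<in># M'"
    then have "x \<in># M" using Meq by simp
    then have "x \<in> insert b B" using M by (auto simp: partitions_in_def)
    moreover have "x \<noteq> b"
    proof
      assume "x = b"
      then have "count M' b > 0" using x by simp
      then show False unfolding M'_def j_def by simp
    qed
    ultimately show "x \<in> B" by simp
  qed
  moreover have sM: "sum_mset M = sum_mset M' + j * b" using Meq by simp
  ultimately have "M' \<in> partitions_in B (n - j * b)" "j * b \<le> n"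
    using M by (auto simp: partitions_in_def)
  then have "j \<le> n div b" "M' \<in> partitions_in B (n - j * b)" using assms(2)
    by (auto simp: less_eq_div_iff_mult_less_eq)
  then show "M \<in> (\<Union>j\<in>{..n div b}. (\<lambda>M. M + replicate_mset j b) ` partitions_in B (n - j * b))"
    using Meq by blast
next
  fix M assume "M \<in> (\<Union>j\<in>{..n div b}. (\<lambda>M. M + replicate_mset j b) ` partitions_in B (n - j * b))"
  then obtain j M' where j: "j \<le> n div b" "M' \<in> partitions_in B (n - j * b)" "M = M' + replicate_mset j b"
    by auto
  have "j * b \<le> n" using j(1) assms(2) by (simp add: less_eq_div_iff_mult_less_eq)
  then show "M \<in> partitions_in (insert b B) n"
    using j by (auto simp: partitions_in_def)
qed

lemma partitions_card:
  assumes "distinct L" "\<forall>x\<in>set L. x > 0"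
  shows "finite (partitions_in (set L) n) \<and> card (partitions_in (set L) n) = cnt L n"
  using assms
proof (induction L arbitrary: n)
  case Nil
  then show ?case by (simp add: partitions_in_empty)
next
  case (Cons b L)
  have b: "b \<notin> set L" "b > 0" using Cons.prems by auto
  define S where "S j = (\<lambda>M. M + replicate_mset j b) ` partitions_in (set L) (n - j * b)" for j
  have eq: "partitions_in (set (b # L)) n = (\<Union>j\<in>{..n div b}. S j)"
    using partitions_in_insert[OF b] by (simp add: S_def)
  have IH: "finite (partitions_in (set L) m) \<and> card (partitions_in (set L) m) = cnt L m" for m
    using Cons by simp
  have fin: "finite (S j)" for j using IH by (simp add: S_def)
  have cardS: "card (S j) = cnt L (n - j * b)" for j
    unfolding S_def using IH by (subst card_image) (auto simp: inj_on_def)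
  have cntS: "M \<in> S j \<Longrightarrow> count M b = j" for M j
  proof -
    assume "M \<in> S j"
    then obtain M' where "M' \<in> partitions_in (set L) (n - j * b)" "M = M' + replicate_mset j b"
      by (auto simp: S_def)
    moreover have "count M' b = 0" using calculation(1) b(1)
      by (auto simp: partitions_in_def count_eq_zero_iff)
    ultimately show "count M b = j" by simp
  qed
  have disj: "\<forall>i\<in>{..n div b}. \<forall>j\<in>{..n div b}. i \<noteq> j \<longrightarrow> S i \<inter> S j = {}"
    using cntS by blast
  have "card (\<Union>j\<in>{..n div b}. S j) = (\<Sum>j\<le>n div b. card (S j))"
    by (rule card_UN_disjoint) (use fin disj in auto)
  then show ?case using eq fin cardS by simp
qed

lemma partitions_finite:
  assumes "finite A" "\<forall>a\<in>A. a > 0"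
  shows "finite (partitions_in A n)"
  using partitions_card[of "sorted_list_of_set A" n] assms by simp

definition ca :: "nat set \<Rightarrow> nat \<Rightarrow> nat \<Rightarrow> nat" where
  "ca A a n = (\<Sum>M\<in>partitions_in A n. count M a)"

lemma ca_small:
  assumes "n < a"
  shows "ca A a n = 0"
proof -
  have "count M a = 0" if "M \<in> partitions_in A n" for M
  proof (rule ccontr)
    assume "count M a \<noteq> 0"
    then have "a \<in># M" by (simp add: count_eq_zero_iff)
    then have "sum_mset M = a + sum_mset (M - {#a#})"
      using insert_DiffM[of a M] sum_mset.add_mset[of a "M - {#a#}"] by simp
    then have "a \<le> sum_mset M" by simp
    then show False using that assms by (simp add: partitions_in_def)
  qed
  then show ?thesis by (simp add: ca_def)
qed

lemma ca_step:
  assumes "finite A" "\<forall>x\<in>A. x > 0" "a \<in> A"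
  shows "ca A a (n + a) = ca A a n + card (partitions_in A n)"
proof -
  have fin: "finite (partitions_in A m)" for m using partitions_finite assms by blast
  have img: "add_mset a ` partitions_in A n \<subseteq> partitions_in A (n + a)"
    using assms(3) by (auto simp: partitions_in_def)
  have "ca A a (n + a) = (\<Sum>M\<in>add_mset a ` partitions_in A n. count M a)"
    unfolding ca_def
  proof (rule sum.mono_neutral_right[OF fin img])
    show "\<forall>M\<in>partitions_in A (n + a) - add_mset a ` partitions_in A n. count M a = 0"
    proof
      fix M assume M: "M \<in> partitions_in A (n + a) - add_mset a ` partitions_in A n"
      show "count M a = 0"
      proof (rule ccontr)
        assume "count M a \<noteq> 0"
        then have "a \<in># M" by (simp add: count_eq_zero_iff)
        then have Meq: "M = add_mset a (M - {#a#})" by simp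
        moreover have "M - {#a#} \<in> partitions_in A n"
        proof -
          have "sum_mset M = sum_mset (M - {#a#}) + a"
            using \<open>a \<in># M\<close> insert_DiffM[of a M] sum_mset.add_mset[of a "M - {#a#}"] by simp
          then show ?thesis using M by (auto simp: partitions_in_def dest: in_diffD)
        qed
        ultimately show False using M by blast
      qed
    qed
  qed
  also have "\<dots> = (\<Sum>M\<in>partitions_in A n. count M a + 1)"
    by (subst sum.reindex) (auto simp: inj_on_def)
  also have "\<dots> = ca A a n + card (partitions_in A n)"
    unfolding ca_def sum.distrib by simp
  finally show ?thesis .
qed

lemma ca_cnt:
  assumes "distinct L" "\<forall>x\<in>set L. x > 0" "a \<in> set L"
  shows "ca (set L) a (n + a) = cnt (a # L) n"
proof (induction n rule: less_induct)
  case (less n)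
  have a0: "a > 0" using assms by simp
  have P: "card (partitions_in (set L) m) = cnt L m" for m using partitions_card assms by blast
  have st: "ca (set L) a (n + a) = ca (set L) a n + cnt L n"
    using ca_step[of "set L" a n] assms P by simp
  show ?case
  proof (cases "n \<ge> a")
    case True
    have "ca (set L) a n = ca (set L) a ((n - a) + a)" using True by simp
    also have "\<dots> = cnt (a # L) (n - a)" using less.IH[of "n - a"] True a0 by (simp del: cnt.simps)
    finally show ?thesis using st cnt_step[OF a0, of L n] True by simp
  next
    case False
    then show ?thesis using st cnt_step[OF a0, of L n] ca_small[of n a] by simp
  qed
qed

lemma NpA_ca:
  assumes "finite A" "\<forall>x\<in>A. x > 0"
  shows "NpA A n = (\<Sum>a\<in>A. ca A a n)"
proof -
  have "size M = (\<Sum>a\<in>A. count M a)" if "M \<in> partitions_in A n" for M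
  proof -
    have sub: "set_mset M \<subseteq> A" using that by (simp add: partitions_in_def)
    have "size M = (\<Sum>a\<in>set_mset M. count M a)" by (simp add: size_multiset_overloaded_eq)
    also have "\<dots> = (\<Sum>a\<in>A. count M a)"
      by (rule sum.mono_neutral_left[OF assms(1) sub]) (auto simp: count_eq_zero_iff)
    finally show ?thesis .
  qed
  then have "NpA A n = (\<Sum>M\<in>partitions_in A n. \<Sum>a\<in>A. count M a)"
    by (simp add: NpA_def)
  also have "\<dots> = (\<Sum>a\<in>A. ca A a n)"
    by (simp add: ca_def sum.swap[of _ A])
  finally show ?thesis .
qed

theorem theorem8:
  fixes A :: "nat set" and k :: nat
  assumes "finite A" and "card A = k" and "\<forall>a\<in>A. a > 0" and "Gcd A = 1"
  shows "(\<lambda>n. real (NpA A n)) \<sim>[at_top]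
         (\<lambda>n. (1 / fact k) * ((\<Sum>a\<in>A. 1 / real a) / (\<Prod>a\<in>A. real a)) * real n ^ k)"
proof -
  have Ane: "A \<noteq> {}" using assms(4) by auto
  define L where "L = sorted_list_of_set A"
  have L: "distinct L" "set L = A" "length L = k"
    using assms(1,2) by (auto simp: L_def)
  have Lpos: "\<forall>x\<in>set L. x > 0" using L assms(3) by simp
  define P where "P = real (prod_list L)"
  have P: "(\<Prod>a\<in>A. real a) = P"
  proof -
    have "(\<Prod>a\<in>A. real a) = real (\<Prod>a\<in>set L. a)" using L by simp
    also have "(\<Prod>a\<in>set L. a) = prod_list L"
      using prod.distinct_set_conv_list[OF L(1), of "\<lambda>x. x"] by simp
    finally show ?thesis by (simp add: P_def)
  qed
  define l where "l = 1 / (fact k * P)"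
  have lim_a: "(\<lambda>n. real (cnt (a # L) n) / real n ^ k) \<longlonglongrightarrow> l / real a" if "a \<in> A" for a
  proof -
    have "(\<lambda>n. real (cnt (a # L) n) / real n ^ length L)
           \<longlonglongrightarrow> 1 / (fact (length L) * real (prod_list L)) / real a"
      using schur[of A a L] assms(1,3,4) L that Lpos by auto
    then show ?thesis using L by (simp add: l_def P_def)
  qed
  define M where "M = Max A"
  have aM: "a \<le> M" if "a \<in> A" for a using assms(1) that by (simp add: M_def)
  have eqn: "real (NpA A (n + M)) / real (n + M) ^ k =
        (\<Sum>a\<in>A. real (cnt (a # L) (n + (M - a))) / real (n + M) ^ k)" for n
  proof -
    have "NpA A (n + M) = (\<Sum>a\<in>A. ca A a (n + M))" using NpA_ca assms(1,3) by blast
    also have "\<dots> = (\<Sum>a\<in>A. cnt (a # L) (n + (M - a)))"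
    proof (intro sum.cong refl)
      fix a assume a: "a \<in> A"
      have "n + M = (n + (M - a)) + a" using aM[OF a] by simp
      then have "ca A a (n + M) = ca (set L) a ((n + (M - a)) + a)" using L by simp
      also have "\<dots> = cnt (a # L) (n + (M - a))" using ca_cnt L Lpos a by blast
      finally show "ca A a (n + M) = cnt (a # L) (n + (M - a))" .
    qed
    finally show ?thesis by (simp add: sum_divide_distrib)
  qed
  define C where "C = (\<Sum>a\<in>A. l / real a)"
  have "(\<lambda>n. \<Sum>a\<in>A. real (cnt (a # L) (n + (M - a))) / real (n + M) ^ k) \<longlonglongrightarrow> C"
    unfolding C_def by (intro tendsto_sum shift_lim lim_a)
  then have "(\<lambda>n. real (NpA A (n + M)) / real (n + M) ^ k) \<longlonglongrightarrow> C"
    unfolding eqn .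
  then have lim: "(\<lambda>n. real (NpA A n) / real n ^ k) \<longlonglongrightarrow> C"
    using LIMSEQ_offset[of "\<lambda>n. real (NpA A n) / real n ^ k" M] by simp
  have P0: "P > 0" unfolding P_def using Lpos by (simp add: prod_list_pos)
  have C0: "C > 0" unfolding C_def l_def
    using assms(1,3) Ane P0 by (intro sum_pos) auto
  have Ceq: "(1 / fact k) * ((\<Sum>a\<in>A. 1 / real a) / (\<Prod>a\<in>A. real a)) = C"
    unfolding P C_def l_def by (simp add: sum_divide_distrib sum_distrib_left mult_ac)
  have "(\<lambda>n. (real (NpA A n) / real n ^ k) / C) \<longlonglongrightarrow> C / C"
    by (intro tendsto_divide lim tendsto_const) (use C0 in auto)
  then have "(\<lambda>n. (real (NpA A n) / real n ^ k) / C) \<longlonglongrightarrow> 1" using C0 by simp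
  moreover have "\<forall>\<^sub>F n in sequentially. (real (NpA A n) / real n ^ k) / C =
      real (NpA A n) / ((1 / fact k) * ((\<Sum>a\<in>A. 1 / real a) / (\<Prod>a\<in>A. real a)) * real n ^ k)"
    using eventually_gt_at_top[of 0] by eventually_elim (unfold Ceq, simp add: mult.commute)
  ultimately have "(\<lambda>n. real (NpA A n) / ((1 / fact k) * ((\<Sum>a\<in>A. 1 / real a) / (\<Prod>a\<in>A. real a)) * real n ^ k)) \<longlonglongrightarrow> 1"
    by (rule Lim_transform_eventually)
  then show ?thesis by (intro asymp_equivI')
qed

end
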